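(* Let $X$ be a real Hilbert space and $h:\Phi_{lsc}^{\mathbb{R}}\to(-\infty,+\infty]$ a proper lower semicontinuous function bounded from below. Let $\gamma>0$ and let $(\phi_n)=((a_n,u_n))$ be generated by the $\Phi_{lsc}^{\mathbb{R}}$-proximal algorithm on $\Phi_{lsc}^{\mathbb{R}}$ described in the context. Then for every $n$ and every $\phi=(a,u)\in\Phi_{lsc}^{\mathbb{R}}$, $$h(\phi)-h(\phi_{n+1})\ge\frac{1}{2\gamma}\big[\|u-u_{n+1}\|^2-\|u-u_n\|^2\big]+\Big(1-\frac{2(a-a_{n+1})}{\gamma}\Big)\frac{\|u_n-u_{n+1}\|^2}{2\gamma}.$$ Moreover, if $\gamma\ge a_n-a_{n+1}$ for all $n\in\mathbb{N}$, then $(h(\phi_n))_{n\in\mathbb{N}}$ is non-increasing.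
   Context: $\Phi_{lsc}^{\mathbb{R}}=\{\phi=(a,u)\in\mathbb{R}\times X\}$ with $\phi(x)=-a\|x\|^2+\langle u,x\rangle$, identified with the Hilbert space $\mathbb{R}\times X$ (inner product $ab+\langle u,v\rangle$). The $X$-subdifferential of $h$ at $\psi$ is $\partial_Xh(\psi)=\{w\in X: h(\phi)-h(\psi)\ge\phi(w)-\psi(w)\ \forall\phi\in\Phi_{lsc}^{\mathbb{R}}\}$. Algorithm: choose $\gamma>0$, $\phi_0=(a_0,u_0)$. For $n\in\mathbb{N}$: find $\phi_{n+1}=(a_{n+1},u_{n+1})$ with $\frac{u_n-u_{n+1}}{\gamma}\in\partial_Xh(\phi_{n+1})$; if no such $\phi_{n+1}$ exists, return $\phi_n$. *)

theory Defs
  imports "HOL-Analysis.Analysis"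
begin

text \<open>An element phi = (a,u) of Phi_lsc^R acts on X as phi(x) = -a*norm x^2 + inner u x.\<close>
definition phi_eval :: "real \<times> 'x::real_inner \<Rightarrow> 'x \<Rightarrow> real" where
  "phi_eval p x = - fst p * (norm x)\<^sup>2 + inner (snd p) x"

definition lsc_fun :: "('a::topological_space \<Rightarrow> ereal) \<Rightarrow> bool" where
  "lsc_fun h \<longleftrightarrow> (\<forall>c. closed {p. h p \<le> c})"

definition X_subdiff :: "(real \<times> 'x::real_inner \<Rightarrow> ereal) \<Rightarrow> real \<times> 'x \<Rightarrow> 'x set" where
  "X_subdiff h psi = {w. h psi < \<infinity> \<and>
     (\<forall>p. h p \<ge> h psi + ereal (phi_eval p w - phi_eval psi w))}"

end

theory Submission
  imports Defs
begin

lemma key_ineq: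
  fixes a a1 g :: real and u u0 u1 :: "'x::real_inner"
  assumes g: "g > 0"
  shows "- a * (norm ((u0 - u1) /\<^sub>R g))\<^sup>2 + inner u ((u0 - u1) /\<^sub>R g)
         - (- a1 * (norm ((u0 - u1) /\<^sub>R g))\<^sup>2 + inner u1 ((u0 - u1) /\<^sub>R g))
       = (1 / (2 * g)) * ((norm (u - u1))\<^sup>2 - (norm (u - u0))\<^sup>2)
              + (1 - 2 * (a - a1) / g) * ((norm (u0 - u1))\<^sup>2 / (2 * g))"
proof -
  define d where "d = u0 - u1"
  define N where "N = (norm d)\<^sup>2"
  define I where "I = inner (u - u1) d"
  have u0: "u - u0 = (u - u1) - d" unfolding d_def by simp
  have e: "(norm (u - u1))\<^sup>2 - (norm (u - u0))\<^sup>2 = 2 * I - N"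
    unfolding u0 I_def N_def by (simp add: power2_norm_eq_inner inner_diff_left inner_diff_right inner_commute)
  have n: "(norm (d /\<^sub>R g))\<^sup>2 = N / g^2"
    using g unfolding N_def by (simp add: power_mult_distrib power_inverse divide_inverse mult.commute)
  have i: "inner u (d /\<^sub>R g) - inner u1 (d /\<^sub>R g) = I / g"
    unfolding I_def by (simp add: inner_diff_left divide_inverse mult.commute right_diff_distrib)
  have "- a * (norm (d /\<^sub>R g))\<^sup>2 + inner u (d /\<^sub>R g) - (- a1 * (norm (d /\<^sub>R g))\<^sup>2 + inner u1 (d /\<^sub>R g))
     = - (a - a1) * (norm (d /\<^sub>R g))\<^sup>2 + (inner u (d /\<^sub>R g) - inner u1 (d /\<^sub>R g))"
    by (simp add: algebra_simps)
  also have "\<dots> = - (a - a1) * (N / g^2) + I / g" unfolding n i ..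
  also have "\<dots> = (1 / (2 * g)) * (2 * I - N) + (1 - 2 * (a - a1) / g) * (N / (2 * g))"
    using g by (simp add: field_simps power2_eq_square)
  finally show ?thesis using e unfolding N_def d_def by simp
qed

theorem proposition5:
  fixes h :: "real \<times> 'x::{real_inner, complete_space} \<Rightarrow> ereal"
    and \<gamma> :: real
    and \<phi>s :: "nat \<Rightarrow> real \<times> 'x"
  assumes not_minf: "\<forall>p. h p \<noteq> -\<infinity>"
    and proper: "\<exists>p. h p < \<infinity>"
    and lsc: "lsc_fun h"
    and bdd_below: "\<exists>m::real. \<forall>p. ereal m \<le> h p"
    and gamma_pos: "\<gamma> > 0"
    and step: "\<forall>n. (snd (\<phi>s n) - snd (\<phi>s (Suc n))) /\<^sub>R \<gamma> \<in> X_subdiff h (\<phi>s (Suc n))"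
  shows "(\<forall>n a u. h (a, u) - h (\<phi>s (Suc n)) \<ge>
            ereal ((1 / (2 * \<gamma>)) * ((norm (u - snd (\<phi>s (Suc n))))\<^sup>2 - (norm (u - snd (\<phi>s n)))\<^sup>2)
              + (1 - 2 * (a - fst (\<phi>s (Suc n))) / \<gamma>) * ((norm (snd (\<phi>s n) - snd (\<phi>s (Suc n))))\<^sup>2 / (2 * \<gamma>))))
       \<and> ((\<forall>n. \<gamma> \<ge> fst (\<phi>s n) - fst (\<phi>s (Suc n))) \<longrightarrow> decseq (\<lambda>n. h (\<phi>s n)))"
proof -
  have main: "h (a, u) - h (\<phi>s (Suc n)) \<ge>
            ereal ((1 / (2 * \<gamma>)) * ((norm (u - snd (\<phi>s (Suc n))))\<^sup>2 - (norm (u - snd (\<phi>s n)))\<^sup>2)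
              + (1 - 2 * (a - fst (\<phi>s (Suc n))) / \<gamma>) * ((norm (snd (\<phi>s n) - snd (\<phi>s (Suc n))))\<^sup>2 / (2 * \<gamma>)))"
    for n a u
  proof -
    obtain a1 u1 where p1: "\<phi>s (Suc n) = (a1, u1)" by fastforce
    define u0 where "u0 = snd (\<phi>s n)"
    define w where "w = (u0 - u1) /\<^sub>R \<gamma>"
    have sd: "w \<in> X_subdiff h (a1, u1)" using step p1 unfolding w_def u0_def by (metis snd_conv)
    hence fin: "h (a1, u1) < \<infinity>" and ge: "h (a, u) \<ge> h (a1, u1) + ereal (phi_eval (a, u) w - phi_eval (a1, u1) w)"
      unfolding X_subdiff_def by auto
    obtain r where r: "h (a1, u1) = ereal r" using fin not_minf by (cases "h (a1, u1)") auto
    have eq: "phi_eval (a, u) w - phi_eval (a1, u1) w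
       = (1 / (2 * \<gamma>)) * ((norm (u - u1))\<^sup>2 - (norm (u - u0))\<^sup>2)
              + (1 - 2 * (a - a1) / \<gamma>) * ((norm (u0 - u1))\<^sup>2 / (2 * \<gamma>))"
      unfolding w_def phi_eval_def using key_ineq[OF gamma_pos, of a u0 u1 u a1]
      by simp
    define c where "c = phi_eval (a, u) w - phi_eval (a1, u1) w"
    have "h (a, u) \<ge> ereal (r + c)" using ge r unfolding c_def by simp
    hence "h (a, u) - ereal r \<ge> ereal c"
      by (cases "h (a, u)") auto
    thus ?thesis using r eq p1 unfolding c_def u0_def by simp
  qed
  moreover have "decseq (\<lambda>n. h (\<phi>s n))" if H: "\<forall>n. \<gamma> \<ge> fst (\<phi>s n) - fst (\<phi>s (Suc n))"
  proof (rule decseq_SucI)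
    fix n
    obtain a0 u0 where p0: "\<phi>s n = (a0, u0)" by fastforce
    obtain a1 u1 where p1: "\<phi>s (Suc n) = (a1, u1)" by fastforce
    have m: "h (a0, u0) - h (a1, u1) \<ge>
            ereal ((1 / (2 * \<gamma>)) * ((norm (u0 - u1))\<^sup>2 - (norm (u0 - u0))\<^sup>2)
              + (1 - 2 * (a0 - a1) / \<gamma>) * ((norm (u0 - u1))\<^sup>2 / (2 * \<gamma>)))"
      using main[where a=a0 and u=u0 and n=n] p0 p1 by simp
    have "a0 - a1 \<le> \<gamma>" using H p0 p1 by (metis fst_conv)
    hence "0 \<le> (1 - 2 * (a0 - a1) / \<gamma>) + 1" using gamma_pos by (simp add: field_simps)
    hence "0 \<le> ((1 - 2 * (a0 - a1) / \<gamma>) + 1) * ((norm (u0 - u1))\<^sup>2 / (2 * \<gamma>))"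
      using gamma_pos by simp
    hence nn: "0 \<le> (1 / (2 * \<gamma>)) * ((norm (u0 - u1))\<^sup>2 - (norm (u0 - u0))\<^sup>2)
              + (1 - 2 * (a0 - a1) / \<gamma>) * ((norm (u0 - u1))\<^sup>2 / (2 * \<gamma>))"
      by (simp add: algebra_simps)
    have "h (a0, u0) - h (a1, u1) \<ge> 0" using order_trans[OF _ m] nn
      by (simp add: zero_ereal_def)
    moreover have "h (a1, u1) \<noteq> \<infinity>"
      using step p1 unfolding X_subdiff_def by (metis (no_types, lifting) mem_Collect_eq order_less_irrefl)
    ultimately have "h (a1, u1) \<le> h (a0, u0)"
      using not_minf by (cases "h (a0, u0)"; cases "h (a1, u1)") auto
    thus "h (\<phi>s (Suc n)) \<le> h (\<phi>s n)" using p0 p1 by simp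
  qed
  ultimately show ?thesis by blast
qed

end
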